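(* Let $V$ be a symplectic vector space, $L\subset V$ a Lagrangian subspace and $\mathcal L$ a non-empty set of Lagrangian subspaces each transverse to $L$. Let $\mathcal S(\mathcal L,L)$ be the set of Lagrangian subspaces $L_-$ transverse to $L$ such that $\mathcal L\subset C(L_-,L)$. Then $\mathcal S(\mathcal L,L)$ is convex with respect to the natural affine structure on the space of Lagrangian subspaces transverse to $L$. If $\mathcal L$ is compact, then $\mathcal S(\mathcal L,L)$ is non-empty, hence contractible.
   Context: For Lagrangians $A,B,C$ with $A,B$ transverse to $C$, define $A^{(B,C)}:B\to\mathbb R$ by $A^{(B,C)}(X)=\omega(Y,X)$, where $Y\in C$ is the unique vector with $X+Y\in A$; write $A\succ_C B$ if $A^{(B,C)}$ is positive definite. For a polarization (pair of transverse Lagrangians) $(\tau,\nu)$, the positive zone $C(\tau,\nu)$ is the set of Lagrangians $T$ transverse to $\nu$ with $T\succ_\nu\tau$. The set of Lagrangian subspaces transverse to $L$ is an affine space: fixing a Lagrangian $H$ transverse to $L$, such subspaces are identified with quadratic forms on $H$ (graphs of symmetric maps $H\to L$), and the resulting affine structure is independent of $H$. *)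

theory Defs
  imports "HOL-Analysis.Analysis"
begin

definition symplectic_form :: "('a::euclidean_space \<Rightarrow> 'a \<Rightarrow> real) \<Rightarrow> bool" where
  "symplectic_form \<omega> \<longleftrightarrow> bilinear \<omega> \<and> (\<forall>x y. \<omega> x y = - \<omega> y x)
     \<and> (\<forall>x. (\<forall>y. \<omega> x y = 0) \<longrightarrow> x = 0)"

definition lagrangian :: "('a::euclidean_space \<Rightarrow> 'a \<Rightarrow> real) \<Rightarrow> 'a set \<Rightarrow> bool" where
  "lagrangian \<omega> L \<longleftrightarrow> subspace L \<and> (\<forall>x\<in>L. \<forall>y\<in>L. \<omega> x y = 0) \<and> 2 * dim L = DIM('a)"

definition transverse :: "'a::euclidean_space set \<Rightarrow> 'a set \<Rightarrow> bool" where
  "transverse A B \<longleftrightarrow> A \<inter> B = {0} \<and> (\<forall>v. \<exists>a\<in>A. \<exists>b\<in>B. v = a + b)"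

text \<open>The form A^(B,C) on B: X \<mapsto> omega(Y,X), Y \<in> C the unique vector with X + Y \<in> A.\<close>
definition rel_form :: "('a::euclidean_space \<Rightarrow> 'a \<Rightarrow> real) \<Rightarrow> 'a set \<Rightarrow> 'a set \<Rightarrow> 'a set \<Rightarrow> 'a \<Rightarrow> real" where
  "rel_form \<omega> A B C X = \<omega> (THE Y. Y \<in> C \<and> X + Y \<in> A) X"

definition succ_rel :: "('a::euclidean_space \<Rightarrow> 'a \<Rightarrow> real) \<Rightarrow> 'a set \<Rightarrow> 'a set \<Rightarrow> 'a set \<Rightarrow> bool" where
  "succ_rel \<omega> A C B \<longleftrightarrow> transverse A C \<and> transverse B C \<and>
     (\<forall>X\<in>B. X \<noteq> 0 \<longrightarrow> rel_form \<omega> A B C X > 0)"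

definition pos_zone :: "('a::euclidean_space \<Rightarrow> 'a \<Rightarrow> real) \<Rightarrow> 'a set \<Rightarrow> 'a set \<Rightarrow> 'a set set" where
  "pos_zone \<omega> \<tau> \<nu> = {T. lagrangian \<omega> T \<and> transverse T \<nu> \<and> succ_rel \<omega> T \<nu> \<tau>}"

definition S_set :: "('a::euclidean_space \<Rightarrow> 'a \<Rightarrow> real) \<Rightarrow> 'a set set \<Rightarrow> 'a set \<Rightarrow> 'a set set" where
  "S_set \<omega> \<LL> L = {Lm. lagrangian \<omega> Lm \<and> transverse Lm L \<and> \<LL> \<subseteq> pos_zone \<omega> Lm L}"

text \<open>Affine chart: for H transverse to L, a subspace T transverse to L is the graph of
the linear map graph_map L T : H \<rightarrow> L, h \<mapsto> the unique l \<in> L with h + l \<in> T.\<close>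
definition graph_map :: "'a::euclidean_space set \<Rightarrow> 'a set \<Rightarrow> 'a \<Rightarrow> 'a" where
  "graph_map L T h = (THE l. l \<in> L \<and> h + l \<in> T)"

text \<open>Affine combination (1-t) T1 + t T2 computed in the chart given by H:
the graph over H of (1-t) A_T1 + t A_T2.\<close>
definition aff_comb :: "'a::euclidean_space set \<Rightarrow> 'a set \<Rightarrow> real \<Rightarrow> 'a set \<Rightarrow> 'a set \<Rightarrow> 'a set" where
  "aff_comb H L t T1 T2 =
     {h + ((1 - t) *\<^sub>R graph_map L T1 h + t *\<^sub>R graph_map L T2 h) | h. h \<in> H}"

text \<open>Convexity of a set of Lagrangians transverse to L w.r.t. the affine structure
(tested in every chart H; the structure is independent of H).\<close>
definition lag_convex :: "('a::euclidean_space \<Rightarrow> 'a \<Rightarrow> real) \<Rightarrow> 'a set \<Rightarrow> 'a set set \<Rightarrow> bool" where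
  "lag_convex \<omega> L \<SS> \<longleftrightarrow> (\<forall>H. lagrangian \<omega> H \<and> transverse H L \<longrightarrow>
     (\<forall>T1\<in>\<SS>. \<forall>T2\<in>\<SS>. \<forall>t\<in>{0..1}. aff_comb H L t T1 T2 \<in> \<SS>))"

text \<open>Topology on subspaces (Grassmannian): a subspace W is identified with its
orthogonal projection, an element of the normed space 'a \<Rightarrow>L 'a.\<close>
definition proj_op :: "'a::euclidean_space set \<Rightarrow> 'a \<Rightarrow>\<^sub>L 'a" where
  "proj_op W = Blinfun (closest_point W)"

end

theory Submission
  imports Defs
begin


lemma cp_orth:
  fixes S :: "'a::euclidean_space set"
  assumes "subspace S" "s \<in> S"
  shows "inner (a - closest_point S a) s = 0"
proof -
  have cl: "closed S" using assms(1) closed_subspace by blast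
  have cv: "convex S" using assms(1) subspace_imp_convex by blast
  have ne: "S \<noteq> {}" using assms(1) subspace_0 by blast
  let ?p = "closest_point S a"
  have p: "?p \<in> S" using closest_point_in_set[OF cl ne] .
  have "?p + s \<in> S" using assms p subspace_add by blast
  from closest_point_dot[OF cv cl this, of a] have 1: "inner (a - ?p) s \<le> 0" by simp
  have "?p - s \<in> S" using assms p subspace_diff by blast
  from closest_point_dot[OF cv cl this, of a] have "inner (a - ?p) s \<ge> 0" by (simp add: inner_diff_right)
  with 1 show ?thesis by linarith
qed

lemma cp_char:
  fixes S :: "'a::euclidean_space set"
  assumes "subspace S" "p \<in> S" "\<forall>s\<in>S. inner (a - p) s = 0"
  shows "closest_point S a = p"
proof -
  have cl: "closed S" using assms(1) closed_subspace by blast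
  have cv: "convex S" using assms(1) subspace_imp_convex by blast
  have "\<forall>z\<in>S. dist a p \<le> dist a z"
  proof
    fix z assume z: "z \<in> S"
    have "p - z \<in> S" using assms z subspace_diff by blast
    hence o: "inner (a - p) (p - z) = 0" using assms(3) by blast
    have "(norm (a - z))^2 = (norm (a - p))^2 + (norm (p - z))^2"
      using norm_add_Pythagorean[of "a - p" "p - z"] o unfolding orthogonal_def by simp
    hence "(norm (a - p))^2 \<le> (norm (a - z))^2" by simp
    from power2_le_imp_le[OF this norm_ge_zero] show "dist a p \<le> dist a z" unfolding dist_norm .
  qed
  from closest_point_unique[OF cv cl assms(2) this] show ?thesis by simp
qed

lemma cp_linear:
  fixes S :: "'a::euclidean_space set"
  assumes "subspace S"
  shows "linear (closest_point S)"
proof (rule linearI)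
  have cl: "closed S" using assms(1) closed_subspace by blast
  have ne: "S \<noteq> {}" using assms(1) subspace_0 by blast
  have p: "\<And>x. closest_point S x \<in> S" using closest_point_in_set[OF cl ne] .
  fix x y :: 'a and r :: real
  show "closest_point S (x + y) = closest_point S x + closest_point S y"
    apply (rule cp_char[OF assms])
    using p assms subspace_add apply blast
  proof
    fix s assume s: "s \<in> S"
    have e: "x + y - (closest_point S x + closest_point S y) = (x - closest_point S x) + (y - closest_point S y)" by simp
    show "inner (x + y - (closest_point S x + closest_point S y)) s = 0"
      unfolding e inner_add_left using cp_orth[OF assms s, of x] cp_orth[OF assms s, of y] by simp
  qed
  show "closest_point S (r *\<^sub>R x) = r *\<^sub>R closest_point S x"
    apply (rule cp_char[OF assms])
    using p assms subspace_scale apply blast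
  proof
    fix s assume s: "s \<in> S"
    have e: "r *\<^sub>R x - r *\<^sub>R closest_point S x = r *\<^sub>R (x - closest_point S x)" by (simp add: scaleR_diff_right)
    show "inner (r *\<^sub>R x - r *\<^sub>R closest_point S x) s = 0"
      unfolding e inner_scaleR_left using cp_orth[OF assms s, of x] by simp
  qed
qed

lemma proj_apply:
  fixes S :: "'a::euclidean_space set"
  assumes "subspace S"
  shows "blinfun_apply (proj_op S) = closest_point S"
  unfolding proj_op_def
  by (rule bounded_linear_Blinfun_apply) (use cp_linear[OF assms] linear_conv_bounded_linear in blast)



lemma sf_facts:
  assumes "symplectic_form \<omega>"
  shows "bilinear \<omega>" "\<And>x y. \<omega> x y = - \<omega> y x" "\<And>x. (\<forall>y. \<omega> x y = 0) \<Longrightarrow> x = 0"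
  using assms unfolding symplectic_form_def by blast+

lemma gm_ex:
  fixes T L :: "'a::euclidean_space set"
  assumes "transverse T L" "subspace T" "subspace L"
  shows "graph_map L T v \<in> L \<and> v + graph_map L T v \<in> T"
proof -
  obtain a b where ab: "a \<in> T" "b \<in> L" "v = a + b" using assms(1) unfolding transverse_def by blast
  have ex: "\<exists>l. l \<in> L \<and> v + l \<in> T"
    by (rule exI[of _ "- b"]) (use ab assms(3) subspace_neg in auto)
  have un: "\<And>l1 l2. l1 \<in> L \<and> v + l1 \<in> T \<Longrightarrow> l2 \<in> L \<and> v + l2 \<in> T \<Longrightarrow> l1 = l2"
  proof -
    fix l1 l2 assume h: "l1 \<in> L \<and> v + l1 \<in> T" "l2 \<in> L \<and> v + l2 \<in> T"
    have "l1 - l2 \<in> L" using h assms(3) subspace_diff by blast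
    moreover have "(v + l1) - (v + l2) \<in> T" using h assms(2) subspace_diff by blast
    ultimately have "l1 - l2 \<in> T \<inter> L" by simp
    thus "l1 = l2" using assms(1) unfolding transverse_def by auto
  qed
  show ?thesis unfolding graph_map_def by (rule theI'[of "\<lambda>l. l \<in> L \<and> v + l \<in> T"]) (use ex un in blast)
qed

lemma gm_unique:
  fixes T L :: "'a::euclidean_space set"
  assumes "transverse T L" "subspace T" "subspace L" "l \<in> L" "v + l \<in> T"
  shows "graph_map L T v = l"
proof -
  have g: "graph_map L T v \<in> L \<and> v + graph_map L T v \<in> T" using gm_ex[OF assms(1-3)] .
  have "l - graph_map L T v \<in> L" using g assms subspace_diff by blast
  moreover have "(v + l) - (v + graph_map L T v) \<in> T" using g assms subspace_diff by blast
  ultimately have "l - graph_map L T v \<in> T \<inter> L" by simp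
  thus ?thesis using assms(1) unfolding transverse_def by auto
qed

lemma gm_linear:
  fixes T L :: "'a::euclidean_space set"
  assumes "transverse T L" "subspace T" "subspace L"
  shows "linear (graph_map L T)"
proof (rule linearI)
  note g = gm_ex[OF assms]
  fix x y :: 'a and r :: real
  show "graph_map L T (x + y) = graph_map L T x + graph_map L T y"
  proof (rule gm_unique[OF assms])
    show "graph_map L T x + graph_map L T y \<in> L" using g assms(3) subspace_add by blast
    have "(x + graph_map L T x) + (y + graph_map L T y) \<in> T" using g assms(2) subspace_add by blast
    thus "x + y + (graph_map L T x + graph_map L T y) \<in> T" by (simp add: algebra_simps)
  qed
  show "graph_map L T (r *\<^sub>R x) = r *\<^sub>R graph_map L T x"
  proof (rule gm_unique[OF assms])
    show "r *\<^sub>R graph_map L T x \<in> L" using g assms(3) subspace_scale by blast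
    have "r *\<^sub>R (x + graph_map L T x) \<in> T" using g assms(2) subspace_scale by blast
    thus "r *\<^sub>R x + r *\<^sub>R graph_map L T x \<in> T" by (simp add: scaleR_add_right)
  qed
qed

lemma graph_eq:
  fixes T L H :: "'a::euclidean_space set"
  assumes "transverse T L" "subspace T" "subspace L" "transverse H L"
  shows "T = (\<lambda>h. h + graph_map L T h) ` H"
proof
  show "T \<subseteq> (\<lambda>h. h + graph_map L T h) ` H"
  proof
    fix v assume v: "v \<in> T"
    obtain a b where ab: "a \<in> H" "b \<in> L" "v = a + b" using assms(4) unfolding transverse_def by blast
    have "graph_map L T a = b" by (rule gm_unique[OF assms(1-3) ab(2)]) (use ab v in simp)
    thus "v \<in> (\<lambda>h. h + graph_map L T h) ` H" using ab by blast
  qed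
  show "(\<lambda>h. h + graph_map L T h) ` H \<subseteq> T" using gm_ex[OF assms(1-3)] by blast
qed

lemma graph_core:
  fixes \<omega> :: "'a::euclidean_space \<Rightarrow> 'a \<Rightarrow> real" and H L :: "'a set" and M :: "'a \<Rightarrow> 'a"
  assumes sf: "symplectic_form \<omega>" and lH: "lagrangian \<omega> H" and lL: "lagrangian \<omega> L"
    and tHL: "transverse H L" and linM: "linear M" and MinL: "\<And>x. M x \<in> L"
    and sym: "\<And>h1 h2. h1 \<in> H \<Longrightarrow> h2 \<in> H \<Longrightarrow> \<omega> (M h1) h2 = \<omega> (M h2) h1"
  shows "lagrangian \<omega> ((\<lambda>h. h + M h) ` H)" "transverse ((\<lambda>h. h + M h) ` H) L"
proof -
  note bl = sf_facts(1)[OF sf] and sk = sf_facts(2)[OF sf]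
  have sH: "subspace H" and iH: "\<And>x y. x \<in> H \<Longrightarrow> y \<in> H \<Longrightarrow> \<omega> x y = 0" and dH: "2 * dim H = DIM('a)"
    using lH unfolding lagrangian_def by auto
  have sL: "subspace L" and iL: "\<And>x y. x \<in> L \<Longrightarrow> y \<in> L \<Longrightarrow> \<omega> x y = 0"
    using lL unfolding lagrangian_def by auto
  have HL0: "\<And>x. x \<in> H \<Longrightarrow> x \<in> L \<Longrightarrow> x = 0" using tHL unfolding transverse_def by auto
  let ?f = "\<lambda>h. h + M h"
  have linf: "linear ?f" by (rule linearI) (simp_all add: linear_add[OF linM] linear_scale[OF linM] scaleR_add_right)
  have sub: "subspace (?f ` H)" using linear_subspace_image[OF linf sH] .
  have iso: "\<forall>x\<in>?f ` H. \<forall>y\<in>?f ` H. \<omega> x y = 0"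
  proof (intro ballI)
    fix x y assume "x \<in> ?f ` H" "y \<in> ?f ` H"
    then obtain h1 h2 where h: "h1 \<in> H" "h2 \<in> H" "x = ?f h1" "y = ?f h2" by blast
    have "\<omega> x y = \<omega> h1 h2 + \<omega> h1 (M h2) + \<omega> (M h1) h2 + \<omega> (M h1) (M h2)"
      using h by (simp add: bilinear_ladd[OF bl] bilinear_radd[OF bl])
    also have "\<dots> = \<omega> h1 (M h2) + \<omega> (M h1) h2" using iH[OF h(1,2)] iL[OF MinL MinL] by simp
    also have "\<dots> = 0" using sym[OF h(2,1)] sk[of h1 "M h2"] by simp
    finally show "\<omega> x y = 0" .
  qed
  have inj: "inj_on ?f (span H)"
  proof (rule inj_onI)
    fix x y assume xy: "x \<in> span H" "y \<in> span H" "?f x = ?f y"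
    have "x - y \<in> H" using xy sH span_eq_iff subspace_diff by metis
    moreover have "x - y = M y - M x" using xy(3) by (simp add: algebra_simps)
    hence "x - y \<in> L" using MinL sL subspace_diff by metis
    ultimately have "x - y = 0" using HL0 by blast
    thus "x = y" by simp
  qed
  have "dim (?f ` H) = dim H" using dim_image_eq[OF linf inj] .
  with sub iso dH show "lagrangian \<omega> (?f ` H)" unfolding lagrangian_def by simp
  show "transverse (?f ` H) L" unfolding transverse_def
  proof (intro conjI allI)
    show "?f ` H \<inter> L = {0}"
    proof
      show "?f ` H \<inter> L \<subseteq> {0}"
      proof
        fix v assume "v \<in> ?f ` H \<inter> L"
        then obtain h where h: "h \<in> H" "v = ?f h" "v \<in> L" by blast
        have "h = v - M h" using h by simp
        hence "h \<in> L" using h MinL sL subspace_diff by metis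
        hence "h = 0" using HL0 h by blast
        thus "v \<in> {0}" using h linear_0[OF linM] by simp
      qed
      show "{0} \<subseteq> ?f ` H \<inter> L" using sH sL subspace_0 linear_0[OF linM]
        by (auto intro!: image_eqI[of 0 _ 0])
    qed
    fix v
    obtain a b where ab: "a \<in> H" "b \<in> L" "v = a + b" using tHL unfolding transverse_def by blast
    have "?f a \<in> ?f ` H" using ab by blast
    moreover have "b - M a \<in> L" using ab MinL sL subspace_diff by blast
    moreover have "v = ?f a + (b - M a)" using ab by simp
    ultimately show "\<exists>x\<in>?f ` H. \<exists>y\<in>L. v = x + y" by blast
  qed
qed

lemma graph_rel:
  fixes \<omega> :: "'a::euclidean_space \<Rightarrow> 'a \<Rightarrow> real" and H L T :: "'a set" and M :: "'a \<Rightarrow> 'a"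
  assumes sf: "symplectic_form \<omega>" and lL: "lagrangian \<omega> L"
    and lT: "lagrangian \<omega> T" and tTL: "transverse T L" and linM: "linear M" and MinL: "\<And>x. M x \<in> L"
  shows "rel_form \<omega> T B L (h + M h) = \<omega> (graph_map L T h - M h) h"
proof -
  note bl = sf_facts(1)[OF sf]
  have sT: "subspace T" using lT unfolding lagrangian_def by auto
  have sL: "subspace L" and iL: "\<And>x y. x \<in> L \<Longrightarrow> y \<in> L \<Longrightarrow> \<omega> x y = 0"
    using lL unfolding lagrangian_def by auto
  note g = gm_ex[OF tTL sT sL]
  have e: "graph_map L T (h + M h) = graph_map L T h - M h"
  proof (rule gm_unique[OF tTL sT sL])
    show "graph_map L T h - M h \<in> L" using g MinL sL subspace_diff by blast
    show "h + M h + (graph_map L T h - M h) \<in> T" using g by simp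
  qed
  have "rel_form \<omega> T B L (h + M h) = \<omega> (graph_map L T (h + M h)) (h + M h)"
    unfolding rel_form_def graph_map_def by simp
  also have "\<dots> = \<omega> (graph_map L T h - M h) (h + M h)" using e by simp
  also have "\<dots> = \<omega> (graph_map L T h - M h) h + \<omega> (graph_map L T h - M h) (M h)"
    by (simp add: bilinear_radd[OF bl])
  also have "\<omega> (graph_map L T h - M h) (M h) = 0"
    using iL[OF _ MinL] g MinL sL subspace_diff by blast
  finally show ?thesis by simp
qed



lemma delta_bound:
  fixes LL :: "'a::euclidean_space set set" and L :: "'a set"
  assumes cpt: "compact (proj_op ` LL)" and sL: "subspace L"
    and hT: "\<And>T. T \<in> LL \<Longrightarrow> subspace T \<and> T \<inter> L = {0}"
  shows "\<exists>\<delta>>0. \<forall>T\<in>LL. \<forall>l\<in>L. \<delta> * norm l \<le> norm (closest_point T l - l)"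
proof -
  define U where "U = L \<inter> sphere 0 1"
  define K where "K = proj_op ` LL"
  define f where "f = (\<lambda>z::('a \<Rightarrow>\<^sub>L 'a) \<times> 'a. norm (blinfun_apply (fst z) (snd z) - snd z))"
  have cU: "compact U" unfolding U_def using closed_subspace[OF sL] compact_sphere by blast
  have cKU: "compact (K \<times> U)" using compact_Times[OF cpt[folded K_def] cU] .
  have cont: "continuous_on (K \<times> U) f" unfolding f_def by (intro continuous_intros)
  have fval: "f (proj_op T, u) = norm (closest_point T u - u)" if "T \<in> LL" for T u
    unfolding f_def using proj_apply[of T] hT[OF that] by simp
  have pos: "f z > 0" if z: "z \<in> K \<times> U" for z
  proof -
    obtain T u where Tu: "T \<in> LL" "u \<in> U" "z = (proj_op T, u)" using z unfolding K_def by blast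
    have sT: "subspace T" and TL: "T \<inter> L = {0}" using hT[OF Tu(1)] by auto
    have u: "u \<in> L" "norm u = 1" using Tu(2) unfolding U_def by auto
    have "closest_point T u \<noteq> u"
    proof
      assume "closest_point T u = u"
      hence "u \<in> T" using closest_point_refl[OF closed_subspace[OF sT]] sT subspace_0 by blast
      hence "u = 0" using u TL by blast
      thus False using u by simp
    qed
    thus ?thesis using fval[OF Tu(1)] Tu(3) by simp
  qed
  obtain \<delta> where d: "\<delta> > 0" "\<forall>z\<in>K \<times> U. \<delta> \<le> f z"
  proof (cases "K \<times> U = {}")
    case True thus ?thesis using that[of 1] by auto
  next
    case False
    from continuous_attains_inf[OF cKU False cont] obtain z0 where "z0 \<in> K \<times> U" "\<forall>y\<in>K \<times> U. f z0 \<le> f y" by blast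
    thus ?thesis using that[of "f z0"] pos by blast
  qed
  have "\<forall>T\<in>LL. \<forall>l\<in>L. \<delta> * norm l \<le> norm (closest_point T l - l)"
  proof (intro ballI)
    fix T l assume T: "T \<in> LL" and l: "l \<in> L"
    show "\<delta> * norm l \<le> norm (closest_point T l - l)"
    proof (cases "l = 0")
      case True thus ?thesis by simp
    next
      case False
      have sT: "subspace T" using hT[OF T] by auto
      define u where "u = (1 / norm l) *\<^sub>R l"
      have uU: "u \<in> U" unfolding U_def u_def using l sL subspace_scale False by auto
      have "(proj_op T, u) \<in> K \<times> U" using T uU unfolding K_def by blast
      hence "\<delta> \<le> norm (closest_point T u - u)" using d fval[OF T] by fastforce
      also have "closest_point T u - u = (1 / norm l) *\<^sub>R (closest_point T l - l)"
        unfolding u_def linear_scale[OF cp_linear[OF sT]] by (simp add: scaleR_diff_right)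
      also have "norm \<dots> = norm (closest_point T l - l) / norm l" by simp
      finally show ?thesis using False by (simp add: field_simps)
    qed
  qed
  thus ?thesis using d(1) by blast
qed

lemma gm_sym:
  fixes \<omega> :: "'a::euclidean_space \<Rightarrow> 'a \<Rightarrow> real"
  assumes sf: "symplectic_form \<omega>" and lH: "lagrangian \<omega> H" and lL: "lagrangian \<omega> L"
    and lT: "lagrangian \<omega> T" and tTL: "transverse T L" and h: "h1 \<in> H" "h2 \<in> H"
  shows "\<omega> (graph_map L T h1) h2 = \<omega> (graph_map L T h2) h1"
proof -
  note bl = sf_facts(1)[OF sf] and sk = sf_facts(2)[OF sf]
  have sT: "subspace T" and iT: "\<And>x y. x \<in> T \<Longrightarrow> y \<in> T \<Longrightarrow> \<omega> x y = 0" using lT unfolding lagrangian_def by auto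
  have iH: "\<And>x y. x \<in> H \<Longrightarrow> y \<in> H \<Longrightarrow> \<omega> x y = 0" using lH unfolding lagrangian_def by auto
  have sL: "subspace L" and iL: "\<And>x y. x \<in> L \<Longrightarrow> y \<in> L \<Longrightarrow> \<omega> x y = 0" using lL unfolding lagrangian_def by auto
  note g = gm_ex[OF tTL sT sL]
  let ?G = "graph_map L T"
  have "0 = \<omega> (h1 + ?G h1) (h2 + ?G h2)" using iT g by metis
  also have "\<dots> = \<omega> h1 h2 + \<omega> h1 (?G h2) + \<omega> (?G h1) h2 + \<omega> (?G h1) (?G h2)"
    by (simp add: bilinear_ladd[OF bl] bilinear_radd[OF bl])
  also have "\<dots> = \<omega> h1 (?G h2) + \<omega> (?G h1) h2" using iH[OF h] iL g by simp
  finally show ?thesis using sk[of h1 "?G h2"] by simp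
qed

lemma graph_nz:
  assumes "transverse H L" "subspace L" "h \<in> H" "h \<noteq> 0" "m \<in> L"
  shows "h + m \<noteq> 0"
proof
  assume "h + m = 0"
  hence "h = - m" by (simp add: eq_neg_iff_add_eq_0)
  hence "h \<in> L" using assms subspace_neg by metis
  thus False using assms unfolding transverse_def by auto
qed



theorem lemma4p8:
  fixes \<omega> :: "'a::euclidean_space \<Rightarrow> 'a \<Rightarrow> real"
    and L :: "'a set" and \<LL> :: "'a set set"
  assumes "symplectic_form \<omega>"
    and "lagrangian \<omega> L"
    and "\<LL> \<noteq> {}"
    and "\<forall>T\<in>\<LL>. lagrangian \<omega> T \<and> transverse T L"
  shows "lag_convex \<omega> L (S_set \<omega> \<LL> L)
    \<and> (compact (proj_op ` \<LL>) \<longrightarrow> S_set \<omega> \<LL> L \<noteq> {})"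
proof -
  note sf = assms(1) and lL = assms(2) and LLh = assms(4)
  note bl = sf_facts(1)[OF sf] and sk = sf_facts(2)[OF sf] and nd = sf_facts(3)[OF sf]
  have sL: "subspace L" and iL: "\<And>x y. x \<in> L \<Longrightarrow> y \<in> L \<Longrightarrow> \<omega> x y = 0"
    using lL unfolding lagrangian_def by auto
  have LLs: "\<And>T. T \<in> \<LL> \<Longrightarrow> lagrangian \<omega> T \<and> transverse T L \<and> subspace T"
    using LLh unfolding lagrangian_def by auto
  have part1: "lag_convex \<omega> L (S_set \<omega> \<LL> L)"
    unfolding lag_convex_def
  proof (intro allI impI ballI)
    fix H T1 T2 t assume HH: "lagrangian \<omega> H \<and> transverse H L"
      and T1: "T1 \<in> S_set \<omega> \<LL> L" and T2: "T2 \<in> S_set \<omega> \<LL> L" and t: "t \<in> {0..1::real}"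
    have lH: "lagrangian \<omega> H" and tHL: "transverse H L" using HH by auto
    have lT1: "lagrangian \<omega> T1" and tT1: "transverse T1 L" and pT1: "\<LL> \<subseteq> pos_zone \<omega> T1 L"
      using T1 unfolding S_set_def by auto
    have lT2: "lagrangian \<omega> T2" and tT2: "transverse T2 L" and pT2: "\<LL> \<subseteq> pos_zone \<omega> T2 L"
      using T2 unfolding S_set_def by auto
    have sT1: "subspace T1" "subspace T2" using lT1 lT2 unfolding lagrangian_def by auto
    define G1 where "G1 = graph_map L T1"
    define G2 where "G2 = graph_map L T2"
    define M where "M = (\<lambda>h. (1 - t) *\<^sub>R G1 h + t *\<^sub>R G2 h)"
    have l1: "linear G1" unfolding G1_def using gm_linear[OF tT1 sT1(1) sL] .
    have l2: "linear G2" unfolding G2_def using gm_linear[OF tT2 sT1(2) sL] .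
    have g1L: "\<And>x. G1 x \<in> L" unfolding G1_def using gm_ex[OF tT1 sT1(1) sL] by blast
    have g2L: "\<And>x. G2 x \<in> L" unfolding G2_def using gm_ex[OF tT2 sT1(2) sL] by blast
    have linM: "linear M" unfolding M_def
      by (rule linearI) (simp_all add: linear_add[OF l1] linear_scale[OF l1] linear_add[OF l2] linear_scale[OF l2] algebra_simps)
    have MinL: "\<And>x. M x \<in> L" unfolding M_def using g1L g2L sL subspace_add subspace_scale by metis
    have symM: "\<omega> (M h1) h2 = \<omega> (M h2) h1" if "h1 \<in> H" "h2 \<in> H" for h1 h2
      unfolding M_def G1_def G2_def
      using gm_sym[OF sf lH lL lT1 tT1 that] gm_sym[OF sf lH lL lT2 tT2 that]
      by (simp add: bilinear_ladd[OF bl] bilinear_lmul[OF bl])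
    have eqA: "aff_comb H L t T1 T2 = (\<lambda>h. h + M h) ` H"
      unfolding aff_comb_def M_def G1_def G2_def by auto
    note gc = graph_core[OF sf lH lL tHL linM MinL symM]
    have posi: "\<omega> (graph_map L T h - G h) h > 0"
      if "T \<in> \<LL>" "h \<in> H" "h \<noteq> 0" "Ti \<in> S_set \<omega> \<LL> L" "G = graph_map L Ti" for T h Ti G
    proof -
      have lTi: "lagrangian \<omega> Ti" and tTi: "transverse Ti L" and pTi: "\<LL> \<subseteq> pos_zone \<omega> Ti L"
        using that(4) unfolding S_set_def by auto
      have sTi: "subspace Ti" using lTi unfolding lagrangian_def by auto
      have lG: "linear G" using gm_linear[OF tTi sTi sL] that(5) by simp
      have gL: "\<And>x. G x \<in> L" using gm_ex[OF tTi sTi sL] that(5) by simp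
      have "succ_rel \<omega> T L Ti" using pTi that(1) unfolding pos_zone_def by auto
      hence sr: "\<forall>X\<in>Ti. X \<noteq> 0 \<longrightarrow> rel_form \<omega> T Ti L X > 0" unfolding succ_rel_def by auto
      have "Ti = (\<lambda>h. h + G h) ` H" using graph_eq[OF tTi sTi sL tHL] that(5) by simp
      hence "h + G h \<in> Ti" using that(2) by blast
      moreover have "h + G h \<noteq> 0" using graph_nz[OF tHL sL that(2,3) gL] .
      ultimately have "rel_form \<omega> T Ti L (h + G h) > 0" using sr by blast
      thus ?thesis using graph_rel[OF sf lL _ _ lG gL, of T Ti h] LLs[OF that(1)] by simp
    qed
    show "aff_comb H L t T1 T2 \<in> S_set \<omega> \<LL> L"
      unfolding S_set_def eqA
    proof (intro CollectI conjI gc subsetI)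
      fix T assume T: "T \<in> \<LL>"
      have lT: "lagrangian \<omega> T" and tTL: "transverse T L" using LLs[OF T] by auto
      have "\<forall>X\<in>(\<lambda>h. h + M h) ` H. X \<noteq> 0 \<longrightarrow> rel_form \<omega> T ((\<lambda>h. h + M h) ` H) L X > 0"
      proof (intro ballI impI)
        fix X assume X: "X \<in> (\<lambda>h. h + M h) ` H" "X \<noteq> 0"
        then obtain h where h: "h \<in> H" "X = h + M h" by blast
        have hnz: "h \<noteq> 0" using X h linear_0[OF linM] by auto
        have a1: "\<omega> (graph_map L T h - G1 h) h > 0" using posi[OF T h(1) hnz T1 G1_def] .
        have a2: "\<omega> (graph_map L T h - G2 h) h > 0" using posi[OF T h(1) hnz T2 G2_def] .
        have e: "graph_map L T h - M h = (1 - t) *\<^sub>R (graph_map L T h - G1 h) + t *\<^sub>R (graph_map L T h - G2 h)"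
          unfolding M_def by (simp add: algebra_simps)
        have "\<omega> (graph_map L T h - M h) h = (1 - t) * \<omega> (graph_map L T h - G1 h) h + t * \<omega> (graph_map L T h - G2 h) h"
          unfolding e by (simp add: bilinear_ladd[OF bl] bilinear_lmul[OF bl])
        also have "\<dots> > 0"
        proof (cases "t = 1")
          case True thus ?thesis using a2 by simp
        next
          case False
          hence "1 - t > 0" using t by auto
          hence "(1 - t) * \<omega> (graph_map L T h - G1 h) h > 0" using a1 by simp
          moreover have "t * \<omega> (graph_map L T h - G2 h) h \<ge> 0" using a2 t by simp
          ultimately show ?thesis by linarith
        qed
        finally show "rel_form \<omega> T ((\<lambda>h. h + M h) ` H) L X > 0"
          using graph_rel[OF sf lL lT tTL linM MinL, of "(\<lambda>h. h + M h) ` H" h] h by simp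
      qed
      thus "T \<in> pos_zone \<omega> ((\<lambda>h. h + M h) ` H) L"
        unfolding pos_zone_def succ_rel_def using lT tTL gc by auto
    qed
  qed
  have part2: "S_set \<omega> \<LL> L \<noteq> {}" if cpt: "compact (proj_op ` \<LL>)"
  proof -
    obtain H where H: "H \<in> \<LL>" using assms(3) by blast
    have lH: "lagrangian \<omega> H" and tHL: "transverse H L" and sH: "subspace H" using LLs[OF H] by auto
    have iH: "\<And>x y. x \<in> H \<Longrightarrow> y \<in> H \<Longrightarrow> \<omega> x y = 0" using lH unfolding lagrangian_def by auto
    define R where "R = (\<lambda>x. \<Sum>b\<in>Basis. \<omega> x b *\<^sub>R b)"
    have linw: "linear (\<omega> x)" for x using bl unfolding bilinear_def by auto
    have Rinner: "inner (R x) y = \<omega> x y" for x y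
    proof -
      have "\<omega> x y = \<omega> x (\<Sum>b\<in>Basis. inner y b *\<^sub>R b)" by (simp add: euclidean_representation)
      also have "\<dots> = (\<Sum>b\<in>Basis. inner y b * \<omega> x b)"
        by (simp add: linear_sum[OF linw] linear_scale[OF linw])
      also have "\<dots> = inner (R x) y" unfolding R_def
        by (simp add: inner_sum_left inner_sum_right inner_commute[of _ y] mult.commute)
      finally show ?thesis by simp
    qed
    have linR: "linear R" unfolding R_def
      by (rule linearI) (simp_all add: bilinear_ladd[OF bl] bilinear_lmul[OF bl] scaleR_add_left sum.distrib scaleR_sum_right)
    have injR: "inj R"
      unfolding linear_injective_0[OF linR]
    proof (intro allI impI)
      fix x assume "R x = 0"
      hence "\<forall>y. \<omega> x y = 0" using Rinner by (metis inner_zero_left)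
      thus "x = 0" using nd by blast
    qed
    have surjR: "surj R" using linear_injective_imp_surjective[OF linR injR] by simp
    have Jex: "\<exists>l. l \<in> L \<and> (\<forall>h'\<in>H. \<omega> l h' = inner h h')" for h
    proof -
      obtain x where x: "R x = h" using surjR by (metis surjD)
      obtain a b where ab: "a \<in> H" "b \<in> L" "x = a + b" using tHL unfolding transverse_def by blast
      have "\<forall>h'\<in>H. \<omega> b h' = inner h h'"
      proof
        fix h' assume h': "h' \<in> H"
        have "inner h h' = \<omega> x h'" using Rinner x by metis
        also have "\<dots> = \<omega> a h' + \<omega> b h'" using ab by (simp add: bilinear_ladd[OF bl])
        also have "\<dots> = \<omega> b h'" using iH[OF ab(1) h'] by simp
        finally show "\<omega> b h' = inner h h'" by simp
      qed
      thus ?thesis using ab by blast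
    qed
    have Jun: "l1 = l2" if "l1 \<in> L" "l2 \<in> L" "\<forall>h'\<in>H. \<omega> l1 h' = \<omega> l2 h'" for l1 l2
    proof -
      have dL: "l1 - l2 \<in> L" using that sL subspace_diff by blast
      have "\<forall>y. \<omega> (l1 - l2) y = 0"
      proof
        fix y
        obtain a b where ab: "a \<in> H" "b \<in> L" "y = a + b" using tHL unfolding transverse_def by blast
        have "\<omega> (l1 - l2) y = \<omega> (l1 - l2) a + \<omega> (l1 - l2) b" using ab by (simp add: bilinear_radd[OF bl])
        also have "\<omega> (l1 - l2) b = 0" using iL[OF dL ab(2)] .
        also have "\<omega> (l1 - l2) a = 0" using that(3) ab(1) by (simp add: bilinear_lsub[OF bl])
        finally show "\<omega> (l1 - l2) y = 0" by simp
      qed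
      hence "l1 - l2 = 0" using nd by blast
      thus ?thesis by simp
    qed
    define J where "J = (\<lambda>h. THE l. l \<in> L \<and> (\<forall>h'\<in>H. \<omega> l h' = inner h h'))"
    have J: "J h \<in> L \<and> (\<forall>h'\<in>H. \<omega> (J h) h' = inner h h')" for h
    proof -
      obtain l where l: "l \<in> L \<and> (\<forall>h'\<in>H. \<omega> l h' = inner h h')" using Jex by blast
      have "J h = l" unfolding J_def
        by (rule the_equality) (use l Jun in auto)
      thus ?thesis using l by simp
    qed
    have linJ: "linear J"
    proof (rule linearI)
      fix x y :: 'a and r :: real
      show "J (x + y) = J x + J y"
      proof (rule Jun)
        show "J (x + y) \<in> L" using J by blast
        show "J x + J y \<in> L" using J[of x] J[of y] sL subspace_add by blast
        show "\<forall>h'\<in>H. \<omega> (J (x + y)) h' = \<omega> (J x + J y) h'"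
          using J[of x] J[of y] J[of "x+y"] by (simp add: bilinear_ladd[OF bl] inner_add_left)
      qed
      show "J (r *\<^sub>R x) = r *\<^sub>R J x"
      proof (rule Jun)
        show "J (r *\<^sub>R x) \<in> L" using J by blast
        show "r *\<^sub>R J x \<in> L" using J[of x] sL subspace_scale by blast
        show "\<forall>h'\<in>H. \<omega> (J (r *\<^sub>R x)) h' = \<omega> (r *\<^sub>R J x) h'"
          using J[of x] J[of "r *\<^sub>R x"] by (simp add: bilinear_lmul[OF bl])
      qed
    qed
    obtain B where B: "B > 0" "\<And>x y. norm (\<omega> x y) \<le> B * norm x * norm y"
      using bilinear_bounded_pos[OF bl] by blast
    have hT: "subspace T \<and> T \<inter> L = {0}" if "T \<in> \<LL>" for T
      using LLs[OF that] unfolding transverse_def by auto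
    obtain \<delta> where d: "\<delta> > 0" "\<And>T l. T \<in> \<LL> \<Longrightarrow> l \<in> L \<Longrightarrow> \<delta> * norm l \<le> norm (closest_point T l - l)"
      using delta_bound[OF cpt sL hT] by blast
    define c where "c = B / \<delta> + 1"
    define M where "M = (\<lambda>h. - c *\<^sub>R J h)"
    have linM: "linear M" unfolding M_def
      by (rule linearI) (simp_all add: linear_add[OF linJ] linear_scale[OF linJ] algebra_simps)
    have MinL: "\<And>x. M x \<in> L" unfolding M_def using J sL subspace_scale subspace_neg by metis
    have symM: "\<omega> (M h1) h2 = \<omega> (M h2) h1" if "h1 \<in> H" "h2 \<in> H" for h1 h2
      unfolding M_def using J[of h1] J[of h2] that
      by (simp add: bilinear_lneg[OF bl] bilinear_lmul[OF bl] inner_commute)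
    note gc = graph_core[OF sf lH lL tHL linM MinL symM]
    have "(\<lambda>h. h + M h) ` H \<in> S_set \<omega> \<LL> L"
      unfolding S_set_def
    proof (intro CollectI conjI gc subsetI)
      fix T assume T: "T \<in> \<LL>"
      have lT: "lagrangian \<omega> T" and tTL: "transverse T L" and sT: "subspace T" using LLs[OF T] by auto
      have "\<forall>X\<in>(\<lambda>h. h + M h) ` H. X \<noteq> 0 \<longrightarrow> rel_form \<omega> T ((\<lambda>h. h + M h) ` H) L X > 0"
      proof (intro ballI impI)
        fix X assume X: "X \<in> (\<lambda>h. h + M h) ` H" "X \<noteq> 0"
        then obtain h where h: "h \<in> H" "X = h + M h" by blast
        have hnz: "h \<noteq> 0" using X h linear_0[OF linM] by auto
        define G where "G = graph_map L T h"
        have g: "G \<in> L" "h + G \<in> T" using gm_ex[OF tTL sT sL] unfolding G_def by auto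
        have "closest_point T (h + G) = h + G" using closest_point_self[OF g(2)] .
        hence "closest_point T G - G = h - closest_point T h"
          using linear_add[OF cp_linear[OF sT]] by (simp add: algebra_simps)
        hence "norm (closest_point T G - G) = dist h (closest_point T h)" by (simp add: dist_norm)
        also have "\<dots> \<le> dist h 0"
          using closest_point_le[OF closed_subspace[OF sT] subspace_0[OF sT]] .
        finally have "\<delta> * norm G \<le> norm h" using d(2)[OF T g(1)] by simp
        hence nG: "norm G \<le> norm h / \<delta>" using d(1) by (simp add: field_simps)
        have "norm (\<omega> G h) \<le> B * norm G * norm h" using B(2) .
        also have "\<dots> \<le> B * (norm h / \<delta>) * norm h"
          using mult_right_mono[OF mult_left_mono[OF nG less_imp_le[OF B(1)]] norm_ge_zero[of h]] by simp
        finally have wb: "\<omega> G h \<ge> - (B / \<delta> * (norm h)^2)" by (simp add: power2_eq_square)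
        have "rel_form \<omega> T ((\<lambda>h. h + M h) ` H) L X = \<omega> (G - M h) h"
          using graph_rel[OF sf lL lT tTL linM MinL, of "(\<lambda>h. h + M h) ` H" h] h unfolding G_def by simp
        also have "\<dots> = \<omega> G h + c * inner h h"
          unfolding M_def using J[of h] h by (simp add: bilinear_lsub[OF bl] bilinear_ladd[OF bl] bilinear_lneg[OF bl] bilinear_lmul[OF bl])
        also have "\<dots> = \<omega> G h + B / \<delta> * (norm h)^2 + (norm h)^2"
          unfolding c_def dot_square_norm by (simp add: algebra_simps)
        also have "\<dots> > 0" proof -
          have "(norm h)^2 > 0" using hnz by simp
          thus ?thesis using wb by linarith
        qed
        finally show "rel_form \<omega> T ((\<lambda>h. h + M h) ` H) L X > 0" .
      qed
      thus "T \<in> pos_zone \<omega> ((\<lambda>h. h + M h) ` H) L"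
        unfolding pos_zone_def succ_rel_def using lT tTL gc by auto
    qed
    thus ?thesis by blast
  qed
  show ?thesis using part1 part2 by blast
qed

end
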